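(* Let $\delta>0$, $K\ge 2$, and let $\Lambda_1,\ldots,\Lambda_K\subset\mathbb{C}$ be regular QAM constellations with zero mean and minimum distances $d_{\min}(\Lambda_k)=\delta$ for all $k\in\{1,\ldots,K\}$. Then the superimposed constellation $$\Lambda=\Lambda_1+\sum_{k=2}^{K}2^{\frac{\sum_{i=1}^{k-1}\log|\Lambda_i|}{2}}\Lambda_k=\Big\{x_1+\sum_{k=2}^K 2^{\frac{\sum_{i=1}^{k-1}\log|\Lambda_i|}{2}}x_k : x_k\in\Lambda_k\Big\}$$ is a regular QAM with zero mean, $d_{\min}(\Lambda)=\delta$, and cardinality $|\Lambda|=\prod_{k=1}^K|\Lambda_k|$.
   Context: Logarithms are base 2, so $2^{\frac{\sum_{i<k}\log|\Lambda_i|}{2}}=\sqrt{\prod_{i<k}|\Lambda_i|}$. A regular QAM with cardinality $L^2$ ($L\ge 2$ an integer) and minimum distance $\delta$ is the set $\{(a+\mathrm{i}b)\delta : a,b\in\{-\tfrac{L-1}{2},-\tfrac{L-1}{2}+1,\ldots,\tfrac{L-1}{2}\}\}\subset\mathbb{C}$. The minimum distance $d_{\min}(\Lambda)$ is the smallest Euclidean distance between two distinct points of $\Lambda$. *)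

theory Defs
  imports "HOL-Analysis.Analysis"
begin

definition qam_coords :: "nat \<Rightarrow> real set" where
  "qam_coords L = {real j - (real L - 1) / 2 | j. j < L}"

definition qam :: "nat \<Rightarrow> real \<Rightarrow> complex set" where
  "qam L d = {(complex_of_real a + \<i> * complex_of_real b) * complex_of_real d
               | a b. a \<in> qam_coords L \<and> b \<in> qam_coords L}"

definition is_regular_qam :: "complex set \<Rightarrow> bool" where
  "is_regular_qam \<Lambda> \<longleftrightarrow> (\<exists>L d. L \<ge> 2 \<and> d > 0 \<and> \<Lambda> = qam L d)"

definition zero_mean :: "complex set \<Rightarrow> bool" where
  "zero_mean \<Lambda> \<longleftrightarrow> finite \<Lambda> \<and> \<Lambda> \<noteq> {} \<and> (\<Sum>x\<in>\<Lambda>. x) / of_nat (card \<Lambda>) = 0"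

definition d_min :: "complex set \<Rightarrow> real" where
  "d_min \<Lambda> = Inf {cmod (x - y) | x y. x \<in> \<Lambda> \<and> y \<in> \<Lambda> \<and> x \<noteq> y}"

definition superimpose :: "nat \<Rightarrow> (nat \<Rightarrow> complex set) \<Rightarrow> complex set" where
  "superimpose K \<Lambda> =
     {x 1 + (\<Sum>k=2..K. complex_of_real
               (2 powr ((\<Sum>i=1..k-1. log 2 (real (card (\<Lambda> i)))) / 2)) * x k)
      | x. \<forall>k\<in>{1..K}. x k \<in> \<Lambda> k}"

end

theory Submission
  imports Defs
begin


lemma coords_alt: "qam_coords L = (\<lambda>j. real j - (real L - 1) / 2) ` {..<L}"
  unfolding qam_coords_def by auto

lemma card_coords: "card (qam_coords L) = L"
  unfolding coords_alt by (subst card_image) (auto simp: inj_on_def)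

lemma finite_coords: "finite (qam_coords L)"
  unfolding coords_alt by simp

lemma qam_alt: "qam L d = (\<lambda>(a,b). (complex_of_real a + \<i> * complex_of_real b) * complex_of_real d) ` (qam_coords L \<times> qam_coords L)"
  unfolding qam_def by auto

lemma finite_qam: "finite (qam L d)"
  unfolding qam_alt by (simp add: finite_coords)

lemma qam_inj:
  assumes "d \<noteq> 0"
    "(complex_of_real a + \<i> * complex_of_real b) * complex_of_real d = (complex_of_real a' + \<i> * complex_of_real b') * complex_of_real d"
  shows "a = a' \<and> b = b'"
proof -
  have "complex_of_real a + \<i> * complex_of_real b = complex_of_real a' + \<i> * complex_of_real b'"
    using assms by simp
  then have "Re (complex_of_real a + \<i> * complex_of_real b) = Re (complex_of_real a' + \<i> * complex_of_real b')"
     "Im (complex_of_real a + \<i> * complex_of_real b) = Im (complex_of_real a' + \<i> * complex_of_real b')" by auto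
  then show ?thesis by simp
qed

lemma card_qam: "d \<noteq> 0 \<Longrightarrow> card (qam L d) = L^2"
  unfolding qam_alt
  apply (subst card_image)
   apply (auto simp: inj_on_def card_cartesian_product card_coords power2_eq_square dest: qam_inj)
  done

lemma coords_neg: "a \<in> qam_coords L \<Longrightarrow> -a \<in> qam_coords L"
proof -
  assume "a \<in> qam_coords L"
  then obtain j where j: "j < L" "a = real j - (real L - 1) / 2" unfolding qam_coords_def by auto
  have "-a = real (L - 1 - j) - (real L - 1) / 2" using j by (simp add: of_nat_diff)
  moreover have "L - 1 - j < L" using j by simp
  ultimately show ?thesis unfolding qam_coords_def by blast
qed

lemma qam_neg: "uminus ` qam L d = qam L d"
proof -
  have *: "x \<in> qam L d \<Longrightarrow> -x \<in> qam L d" for x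
  proof -
    assume "x \<in> qam L d"
    then obtain a b where ab: "a \<in> qam_coords L" "b \<in> qam_coords L"
      "x = (complex_of_real a + \<i> * complex_of_real b) * complex_of_real d" unfolding qam_def by auto
    have "-x = (complex_of_real (-a) + \<i> * complex_of_real (-b)) * complex_of_real d"
      using ab by (simp add: algebra_simps)
    then show ?thesis unfolding qam_def using coords_neg ab by blast
  qed
  show ?thesis
  proof
    show "uminus ` qam L d \<subseteq> qam L d" using * by auto
    show "qam L d \<subseteq> uminus ` qam L d"
    proof
      fix x assume "x \<in> qam L d"
      then have "-x \<in> qam L d" by (rule *)
      then show "x \<in> uminus ` qam L d" by (metis image_eqI minus_minus)
    qed
  qed
qed

lemma coords_ne: "L \<ge> 1 \<Longrightarrow> qam_coords L \<noteq> {}"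
  unfolding coords_alt by (auto simp: lessThan_empty_iff)

lemma zero_mean_qam: "L \<ge> 1 \<Longrightarrow> zero_mean (qam L d)"
proof -
  assume L: "L \<ge> 1"
  let ?S = "\<Sum>x\<in>qam L d. x"
  have "?S = (\<Sum>x\<in>uminus ` qam L d. x)" by (simp add: qam_neg)
  also have "\<dots> = (\<Sum>x\<in>qam L d. - x)"
    by (subst sum.reindex) (auto simp: inj_on_def)
  also have "\<dots> = - ?S" by (simp add: sum_negf)
  finally have "?S = 0" by simp
  moreover have "qam L d \<noteq> {}" using coords_ne[OF L] unfolding qam_alt by auto
  ultimately show ?thesis unfolding zero_mean_def using finite_qam by simp
qed

lemma coord_diff:
  assumes "a \<in> qam_coords L" "a' \<in> qam_coords L" "a \<noteq> a'"
  shows "\<bar>a - a'\<bar> \<ge> 1"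
proof -
  obtain j j' where "a = real j - (real L - 1) / 2" "a' = real j' - (real L - 1) / 2"
    using assms unfolding qam_coords_def by auto
  then have "a - a' = real j - real j'" "j \<noteq> j'" using assms by auto
  then show ?thesis
    by (cases "j < j'") (auto simp: abs_if)
qed

lemma d_min_qam:
  assumes "L \<ge> 2" "d > 0"
  shows "d_min (qam L d) = d"
  unfolding d_min_def
proof (rule cInf_eq_minimum)
  let ?c = "(real L - 1) / 2"
  have c0: "0 - ?c \<in> qam_coords L" and c1: "1 - ?c \<in> qam_coords L"
    unfolding qam_coords_def using assms by (auto intro!: exI[of _ 0] exI[of _ 1])
  let ?x = "(complex_of_real (1 - ?c) + \<i> * complex_of_real (0 - ?c)) * complex_of_real d"
  let ?y = "(complex_of_real (0 - ?c) + \<i> * complex_of_real (0 - ?c)) * complex_of_real d"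
  have xy: "?x \<in> qam L d" "?y \<in> qam L d" unfolding qam_def using c0 c1 by blast+
  have "?x - ?y = complex_of_real d" by (simp add: algebra_simps)
  then have "cmod (?x - ?y) = d" using assms by simp
  moreover have "?x \<noteq> ?y" using \<open>?x - ?y = complex_of_real d\<close> assms by auto
  ultimately show "d \<in> {cmod (x - y) |x y. x \<in> qam L d \<and> y \<in> qam L d \<and> x \<noteq> y}"
    using xy by (metis (mono_tags, lifting) mem_Collect_eq)
next
  fix z assume "z \<in> {cmod (x - y) |x y. x \<in> qam L d \<and> y \<in> qam L d \<and> x \<noteq> y}"
  then obtain x y where z: "z = cmod (x - y)" "x \<in> qam L d" "y \<in> qam L d" "x \<noteq> y" by auto
  then obtain a b a' b' where ab: "a \<in> qam_coords L" "b \<in> qam_coords L"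
      "x = (complex_of_real a + \<i> * complex_of_real b) * complex_of_real d"
    "a' \<in> qam_coords L" "b' \<in> qam_coords L"
      "y = (complex_of_real a' + \<i> * complex_of_real b') * complex_of_real d"
    unfolding qam_def by blast
  have ne: "a \<noteq> a' \<or> b \<noteq> b'" using ab z by auto
  have re: "Re (x - y) = (a - a') * d" and im: "Im (x - y) = (b - b') * d" using ab by (simp_all add: algebra_simps)
  show "d \<le> z"
  proof (cases "a \<noteq> a'")
    case True
    then have "\<bar>a - a'\<bar> \<ge> 1" using coord_diff ab by blast
    then have "\<bar>Re (x - y)\<bar> \<ge> d" using re assms by (simp add: abs_mult)
    then show ?thesis using abs_Re_le_cmod[of "x - y"] z by linarith
  next
    case False
    then have "\<bar>b - b'\<bar> \<ge> 1" using coord_diff ab ne by blast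
    then have "\<bar>Im (x - y)\<bar> \<ge> d" using im assms by (simp add: abs_mult)
    then show ?thesis using abs_Im_le_cmod[of "x - y"] z by linarith
  qed
qed



lemma coords_comb:
  assumes "N \<ge> 1" "L \<ge> 1"
  shows "{a + real N * b | a b. a \<in> qam_coords N \<and> b \<in> qam_coords L} = qam_coords (N * L)"
proof
  show "{a + real N * b | a b. a \<in> qam_coords N \<and> b \<in> qam_coords L} \<subseteq> qam_coords (N * L)"
  proof
    fix z assume "z \<in> {a + real N * b | a b. a \<in> qam_coords N \<and> b \<in> qam_coords L}"
    then obtain j j' where jj: "j < N" "j' < L"
      "z = (real j - (real N - 1) / 2) + real N * (real j' - (real L - 1) / 2)"
      unfolding qam_coords_def by auto
    have "z = real (j + N * j') - (real (N * L) - 1) / 2" using jj by (simp add: field_simps)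
    moreover have "j + N * j' < N * L"
    proof -
      have "j + N * j' < N * (j' + 1)" using jj by simp
      also have "\<dots> \<le> N * L" using jj by (intro mult_le_mono2) simp
      finally show ?thesis .
    qed
    ultimately show "z \<in> qam_coords (N * L)" unfolding qam_coords_def by blast
  qed
next
  show "qam_coords (N * L) \<subseteq> {a + real N * b | a b. a \<in> qam_coords N \<and> b \<in> qam_coords L}"
  proof
    fix z assume "z \<in> qam_coords (N * L)"
    then obtain m where m: "m < N * L" "z = real m - (real (N * L) - 1) / 2"
      unfolding qam_coords_def by auto
    define j where "j = m mod N"
    define j' where "j' = m div N"
    have jl: "j < N" using assms unfolding j_def by simp
    have jl': "j' < L" using m assms unfolding j'_def by (simp add: div_less_iff_less_mult mult.commute)
    have "m = j + N * j'" unfolding j_def j'_def by simp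
    then have "real m = real j + real N * real j'" by simp
    then have "z = (real j - (real N - 1) / 2) + real N * (real j' - (real L - 1) / 2)"
      using m by (simp add: field_simps)
    moreover have "real j - (real N - 1) / 2 \<in> qam_coords N" "real j' - (real L - 1) / 2 \<in> qam_coords L"
      unfolding qam_coords_def using jl jl' by blast+
    ultimately show "z \<in> {a + real N * b | a b. a \<in> qam_coords N \<and> b \<in> qam_coords L}" by blast
  qed
qed

lemma qam_comb:
  assumes "N \<ge> 1" "L \<ge> 1"
  shows "{s + complex_of_real (real N) * y | s y. s \<in> qam N d \<and> y \<in> qam L d} = qam (N * L) d"
proof
  show "{s + complex_of_real (real N) * y | s y. s \<in> qam N d \<and> y \<in> qam L d} \<subseteq> qam (N * L) d"
  proof
    fix z assume "z \<in> {s + complex_of_real (real N) * y | s y. s \<in> qam N d \<and> y \<in> qam L d}"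
    then obtain a b a' b' where ab: "a \<in> qam_coords N" "b \<in> qam_coords N"
      "a' \<in> qam_coords L" "b' \<in> qam_coords L"
      "z = (complex_of_real a + \<i> * complex_of_real b) * complex_of_real d
         + complex_of_real (real N) * ((complex_of_real a' + \<i> * complex_of_real b') * complex_of_real d)"
      unfolding qam_def by blast
    have "z = (complex_of_real (a + real N * a') + \<i> * complex_of_real (b + real N * b')) * complex_of_real d"
      using ab by (simp add: algebra_simps)
    moreover have "a + real N * a' \<in> qam_coords (N * L)" "b + real N * b' \<in> qam_coords (N * L)"
      using ab coords_comb[OF assms, symmetric] by blast+
    ultimately show "z \<in> qam (N * L) d" unfolding qam_def by blast
  qed
next
  show "qam (N * L) d \<subseteq> {s + complex_of_real (real N) * y | s y. s \<in> qam N d \<and> y \<in> qam L d}"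
  proof
    fix z assume "z \<in> qam (N * L) d"
    then obtain a b where ab: "a \<in> qam_coords (N * L)" "b \<in> qam_coords (N * L)"
      "z = (complex_of_real a + \<i> * complex_of_real b) * complex_of_real d" unfolding qam_def by blast
    obtain a1 a2 where a: "a1 \<in> qam_coords N" "a2 \<in> qam_coords L" "a = a1 + real N * a2"
      using ab coords_comb[OF assms] by blast
    obtain b1 b2 where b: "b1 \<in> qam_coords N" "b2 \<in> qam_coords L" "b = b1 + real N * b2"
      using ab coords_comb[OF assms] by blast
    have "z = (complex_of_real a1 + \<i> * complex_of_real b1) * complex_of_real d
         + complex_of_real (real N) * ((complex_of_real a2 + \<i> * complex_of_real b2) * complex_of_real d)"
      using ab a b by (simp add: algebra_simps)
    moreover have "(complex_of_real a1 + \<i> * complex_of_real b1) * complex_of_real d \<in> qam N d"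
      "(complex_of_real a2 + \<i> * complex_of_real b2) * complex_of_real d \<in> qam L d"
      unfolding qam_def using a b by blast+
    ultimately show "z \<in> {s + complex_of_real (real N) * y | s y. s \<in> qam N d \<and> y \<in> qam L d}" by blast
  qed
qed

definition coef :: "(nat \<Rightarrow> complex set) \<Rightarrow> nat \<Rightarrow> complex" where
  "coef \<Lambda> k = complex_of_real (2 powr ((\<Sum>i=1..k-1. log 2 (real (card (\<Lambda> i)))) / 2))"

lemma super_1: "superimpose 1 \<Lambda> = \<Lambda> 1"
  unfolding superimpose_def by (auto intro: exI[of _ "\<lambda>_. _"])

lemma super_Suc:
  assumes "K \<ge> 1"
  shows "superimpose (Suc K) \<Lambda> = {s + coef \<Lambda> (Suc K) * y | s y. s \<in> superimpose K \<Lambda> \<and> y \<in> \<Lambda> (Suc K)}"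
proof
  show "superimpose (Suc K) \<Lambda> \<subseteq> {s + coef \<Lambda> (Suc K) * y | s y. s \<in> superimpose K \<Lambda> \<and> y \<in> \<Lambda> (Suc K)}"
  proof
    fix z assume "z \<in> superimpose (Suc K) \<Lambda>"
    then obtain x where x: "\<forall>k\<in>{1..Suc K}. x k \<in> \<Lambda> k"
      "z = x 1 + (\<Sum>k=2..Suc K. coef \<Lambda> k * x k)"
      unfolding superimpose_def coef_def by blast
    have "z = (x 1 + (\<Sum>k=2..K. coef \<Lambda> k * x k)) + coef \<Lambda> (Suc K) * x (Suc K)"
      using x assms by (simp add: algebra_simps)
    moreover have "x 1 + (\<Sum>k=2..K. coef \<Lambda> k * x k) \<in> superimpose K \<Lambda>"
      unfolding superimpose_def coef_def using x by auto
    moreover have "x (Suc K) \<in> \<Lambda> (Suc K)" using x by auto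
    ultimately show "z \<in> {s + coef \<Lambda> (Suc K) * y | s y. s \<in> superimpose K \<Lambda> \<and> y \<in> \<Lambda> (Suc K)}"
      by blast
  qed
next
  show "{s + coef \<Lambda> (Suc K) * y | s y. s \<in> superimpose K \<Lambda> \<and> y \<in> \<Lambda> (Suc K)} \<subseteq> superimpose (Suc K) \<Lambda>"
  proof
    fix z assume "z \<in> {s + coef \<Lambda> (Suc K) * y | s y. s \<in> superimpose K \<Lambda> \<and> y \<in> \<Lambda> (Suc K)}"
    then obtain s y where sy: "s \<in> superimpose K \<Lambda>" "y \<in> \<Lambda> (Suc K)" "z = s + coef \<Lambda> (Suc K) * y"
      by blast
    then obtain x where x: "\<forall>k\<in>{1..K}. x k \<in> \<Lambda> k"
      "s = x 1 + (\<Sum>k=2..K. coef \<Lambda> k * x k)"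
      unfolding superimpose_def coef_def by blast
    define x' where "x' = x(Suc K := y)"
    have "(\<Sum>k=2..K. coef \<Lambda> k * x' k) = (\<Sum>k=2..K. coef \<Lambda> k * x k)"
      unfolding x'_def by (rule sum.cong) auto
    then have "z = x' 1 + (\<Sum>k=2..Suc K. coef \<Lambda> k * x' k)"
      using sy x assms by (simp add: x'_def algebra_simps)
    moreover have "\<forall>k\<in>{1..Suc K}. x' k \<in> \<Lambda> k" using x sy unfolding x'_def
      by (auto simp: le_Suc_eq)
    ultimately show "z \<in> superimpose (Suc K) \<Lambda>" unfolding superimpose_def coef_def by blast
  qed
qed

lemma log_sum_sq:
  fixes n :: nat
  assumes "\<forall>i\<in>{1..n}. L i \<ge> (1::nat)"
  shows "(\<Sum>i=1..n. log 2 (real (L i ^ 2))) = 2 * log 2 (real (\<Prod>i=1..n. L i))"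
  using assms
proof (induction n)
  case 0
  then show ?case by simp
next
  case (Suc n)
  have pos: "(\<Prod>i=1..n. L i) \<noteq> 0" using Suc.prems by (auto simp: Suc_le_eq)
  have "L (Suc n) \<noteq> 0" using Suc.prems by (auto simp: Suc_le_eq)
  then show ?case using Suc pos
    by (simp add: log_mult log_nat_power algebra_simps)
qed

lemma coef_eq:
  assumes "\<forall>i\<in>{1..K}. card (\<Lambda> i) = L i ^ 2 \<and> L i \<ge> 1"
  shows "coef \<Lambda> (Suc K) = complex_of_real (real (\<Prod>i=1..K. L i))"
proof -
  have "(\<Sum>i=1..K. log 2 (real (card (\<Lambda> i)))) = (\<Sum>i=1..K. log 2 (real (L i ^ 2)))"
    using assms by (intro sum.cong) auto
  also have "\<dots> = 2 * log 2 (real (\<Prod>i=1..K. L i))"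
    using assms log_sum_sq[of K L] by auto
  finally have e: "(\<Sum>i=1..K. log 2 (real (card (\<Lambda> i)))) / 2 = log 2 (real (\<Prod>i=1..K. L i))" by simp
  have pos: "(\<Prod>i=1..K. L i) > 0" using assms by (auto intro!: prod_pos)
  have p: "2 powr (log 2 (real (\<Prod>i=1..K. L i))) = real (\<Prod>i=1..K. L i)" using pos by (intro powr_log_cancel) (simp_all del: of_nat_prod)
  show ?thesis unfolding coef_def by (simp only: diff_Suc_1 e p)
qed

lemma super_qam:
  assumes "K \<ge> 1" "d \<noteq> 0" "\<forall>k\<in>{1..K}. \<Lambda> k = qam (L k) d \<and> L k \<ge> 1"
  shows "superimpose K \<Lambda> = qam (\<Prod>k=1..K. L k) d"
  using assms
proof (induction K)
  case 0
  then show ?case by simp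
next
  case (Suc K)
  show ?case
  proof (cases "K = 0")
    case True
    then show ?thesis using super_1 Suc.prems by simp
  next
    case False
    then have K1: "K \<ge> 1" by simp
    have cards: "\<forall>i\<in>{1..K}. card (\<Lambda> i) = L i ^ 2 \<and> L i \<ge> 1"
      using Suc.prems card_qam[OF \<open>d \<noteq> 0\<close>] by auto
    have IH: "superimpose K \<Lambda> = qam (\<Prod>k=1..K. L k) d" using Suc K1 by auto
    have N1: "(\<Prod>k=1..K. L k) \<ge> 1" using cards
      by (simp add: Suc_le_eq prod_pos)
    have LS: "\<Lambda> (Suc K) = qam (L (Suc K)) d" "L (Suc K) \<ge> 1" using Suc.prems by auto
    have "superimpose (Suc K) \<Lambda> = {s + coef \<Lambda> (Suc K) * y | s y. s \<in> superimpose K \<Lambda> \<and> y \<in> \<Lambda> (Suc K)}"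
      using super_Suc K1 by simp
    also have "\<dots> = {s + complex_of_real (real (\<Prod>i=1..K. L i)) * y | s y. s \<in> qam (\<Prod>k=1..K. L k) d \<and> y \<in> qam (L (Suc K)) d}"
      using coef_eq[OF cards] IH LS by simp
    also have "\<dots> = qam ((\<Prod>k=1..K. L k) * L (Suc K)) d"
      by (rule qam_comb[OF N1 LS(2)])
    also have "\<dots> = qam (\<Prod>k=1..Suc K. L k) d" by simp
    finally show ?thesis .
  qed
qed



theorem lemma2:
  fixes \<delta> :: real and K :: nat and \<Lambda> :: "nat \<Rightarrow> complex set"
  assumes "\<delta> > 0" and "K \<ge> 2"
    and "\<And>k. k \<in> {1..K} \<Longrightarrow> is_regular_qam (\<Lambda> k)"
    and "\<And>k. k \<in> {1..K} \<Longrightarrow> zero_mean (\<Lambda> k)"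
    and "\<And>k. k \<in> {1..K} \<Longrightarrow> d_min (\<Lambda> k) = \<delta>"
  shows "is_regular_qam (superimpose K \<Lambda>) \<and> zero_mean (superimpose K \<Lambda>)
         \<and> d_min (superimpose K \<Lambda>) = \<delta>
         \<and> card (superimpose K \<Lambda>) = (\<Prod>k=1..K. card (\<Lambda> k))"
proof -
  have "\<forall>k\<in>{1..K}. \<exists>L d. L \<ge> 2 \<and> d > 0 \<and> \<Lambda> k = qam L d"
    using assms(3) unfolding is_regular_qam_def by blast
  then obtain L D where LD: "\<forall>k\<in>{1..K}. L k \<ge> 2 \<and> D k > 0 \<and> \<Lambda> k = qam (L k) (D k)"
    by metis
  have Lk: "\<forall>k\<in>{1..K}. \<Lambda> k = qam (L k) \<delta> \<and> L k \<ge> 1"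
  proof
    fix k assume k: "k \<in> {1..K}"
    have "D k = \<delta>" using d_min_qam[of "L k" "D k"] LD k assms(5)[OF k] by auto
    moreover have "L k \<ge> 2" using LD k by blast
    moreover have "\<Lambda> k = qam (L k) (D k)" using LD k by blast
    ultimately show "\<Lambda> k = qam (L k) \<delta> \<and> L k \<ge> 1" by simp
  qed
  define N where "N = (\<Prod>k=1..K. L k)"
  have S: "superimpose K \<Lambda> = qam N \<delta>"
    unfolding N_def using super_qam[of K \<delta> \<Lambda> L] Lk assms by simp
  have "N \<ge> (\<Prod>k=1..K. (2::nat))" unfolding N_def
    using LD by (intro prod_mono) auto
  moreover have "(\<Prod>k=1..K. (2::nat)) \<ge> 2" using assms(2)
    by (simp add: self_le_power)
  ultimately have N2: "N \<ge> 2" by linarith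
  have "card (superimpose K \<Lambda>) = N ^ 2" using S card_qam assms(1) by simp
  also have "\<dots> = (\<Prod>k=1..K. L k ^ 2)" unfolding N_def by (rule prod_power_distrib)
  also have "\<dots> = (\<Prod>k=1..K. card (\<Lambda> k))"
    using Lk card_qam[of \<delta>] assms(1) by (intro prod.cong) auto
  finally have C: "card (superimpose K \<Lambda>) = (\<Prod>k=1..K. card (\<Lambda> k))" .
  show ?thesis
    unfolding S[symmetric] using C
    by (metis S N2 assms(1) d_min_qam zero_mean_qam is_regular_qam_def one_le_numeral order_trans)
qed


end
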